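(* Let $p,\delta,\Delta$ be positive reals with $p<1$, let $n^-<n^+$ and $a$ be positive integers, and let $I=[n^-,n^+]$. Suppose that: (1) there is a function $f$ (differentiable on $I$) such that for each integer $n\in I$, $\Pr\big(\chi(G_{n,p})\in[f(n)-\Delta,f(n)+\Delta]\big)\ge0.99$; (2) for all real $n\in I$, $f'(n)\ge \frac1a+\delta$; (3) for each integer $n\in I$ there are integers $s_n,t_n$ with $\Pr\big(\chi(G_{n,p})\in[s_n,t_n]\big)\ge0.9$; (4) there is an increasing integer-valued function $r(n)$ such that for each integer $n\in I$ there is a coupling of $G_{n,p}$ and $G_{n+ar(n),p}$ with $\Pr\big(\chi(G_{n+ar(n),p})\le\chi(G_{n,p})+r(n)\big)\ge0.4$; (5) $n^+-n^-\ge 5\Delta/\delta$ and $n^+-n^-\ge 5a\,r(n^+)$. Then there is some integer $n\in I$ with $t_n-s_n>\frac{a\delta r(n)}{2}$.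
   Context: $G_{n,p}$ is the binomial random graph on $n$ labelled vertices with edge probability $p$; $\chi$ denotes chromatic number. A coupling of two random graphs is a joint probability space on which both are defined with their correct marginal distributions. *)

theory Defs
  imports "HOL-Analysis.Analysis" "HOL-Probability.Probability"
begin

text \<open>Simple graphs on the labelled vertex set {0..<n}, represented by their edge sets
(each edge is a 2-element set of vertices).\<close>

definition all_edges :: "nat \<Rightarrow> nat set set" where
  "all_edges n = {e. \<exists>u v. u < n \<and> v < n \<and> u \<noteq> v \<and> e = {u, v}}"

definition proper_colouring :: "nat \<Rightarrow> nat set set \<Rightarrow> nat \<Rightarrow> (nat \<Rightarrow> nat) \<Rightarrow> bool" where
  "proper_colouring n E k c \<longleftrightarrow>
     (\<forall>v<n. c v < k) \<and> (\<forall>u<n. \<forall>v<n. u \<noteq> v \<longrightarrow> {u, v} \<in> E \<longrightarrow> c u \<noteq> c v)"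

definition chromatic_number :: "nat \<Rightarrow> nat set set \<Rightarrow> nat" where
  "chromatic_number n E = (LEAST k. \<exists>c. proper_colouring n E k c)"

definition gnp :: "nat \<Rightarrow> real \<Rightarrow> nat set set pmf" where
  "gnp n p = map_pmf (\<lambda>b. {e \<in> all_edges n. b e})
                     (Pi_pmf (all_edges n) False (\<lambda>_. bernoulli_pmf p))"

end

theory Submission
  imports Defs
begin

lemma pmf_inter_lb:
  "measure_pmf.prob M (A \<inter> B) \<ge> measure_pmf.prob M A + measure_pmf.prob M B - 1"
proof -
  have 1: "measure_pmf.prob M A = measure_pmf.prob M (A \<inter> B) + measure_pmf.prob M (A - B)"
  proof -
    have e: "A \<inter> B \<union> (A - B) = A" by blast
    have "measure_pmf.prob M (A \<inter> B \<union> (A - B)) = measure_pmf.prob M (A \<inter> B) + measure_pmf.prob M (A - B)"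
      by (rule measure_pmf.finite_measure_Union) auto
    then show ?thesis by (simp only: e)
  qed
  have 2: "measure_pmf.prob M (B \<union> (A - B)) = measure_pmf.prob M B + measure_pmf.prob M (A - B)"
    using measure_pmf.finite_measure_Union[of B M "A - B"] by auto
  have "measure_pmf.prob M (B \<union> (A - B)) \<le> 1" by (rule measure_pmf.prob_le_1)
  then show ?thesis using 1 2 by linarith
qed

lemma pmf_inter_ne:
  assumes "measure_pmf.prob M A + measure_pmf.prob M B > 1"
  shows "A \<inter> B \<noteq> {}"
  using pmf_inter_lb[of M A B] assms by auto

lemma pmf_inter3_ne:
  assumes "measure_pmf.prob M A + measure_pmf.prob M B + measure_pmf.prob M C > 2"
  shows "A \<inter> B \<inter> C \<noteq> {}"
proof -
  have "measure_pmf.prob M (A \<inter> B \<inter> C) \<ge> measure_pmf.prob M (A \<inter> B) + measure_pmf.prob M C - 1"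
    by (rule pmf_inter_lb)
  moreover have "measure_pmf.prob M (A \<inter> B) \<ge> measure_pmf.prob M A + measure_pmf.prob M B - 1"
    by (rule pmf_inter_lb)
  ultimately show ?thesis using assms by auto
qed

theorem lemma18:
  fixes p \<delta> \<Delta> :: real
    and nm np a :: nat
    and f f' :: "real \<Rightarrow> real"
    and s t :: "nat \<Rightarrow> int"
    and r :: "nat \<Rightarrow> nat"
  assumes p_pos: "0 < p" and p_lt1: "p < 1"
    and delta_pos: "0 < \<delta>" and Delta_pos: "0 < \<Delta>"
    and nm_pos: "0 < nm" and nm_lt_np: "nm < np" and a_pos: "0 < a"
    and f_deriv: "\<And>x. real nm \<le> x \<Longrightarrow> x \<le> real np \<Longrightarrow>
                   (f has_real_derivative f' x) (at x within {real nm..real np})"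
    and f_conc: "\<And>n. nm \<le> n \<Longrightarrow> n \<le> np \<Longrightarrow>
        measure_pmf.prob (gnp n p)
          {G. f (real n) - \<Delta> \<le> real (chromatic_number n G) \<and>
              real (chromatic_number n G) \<le> f (real n) + \<Delta>} \<ge> 0.99"
    and f'_lower: "\<And>x. real nm \<le> x \<Longrightarrow> x \<le> real np \<Longrightarrow> f' x \<ge> 1 / real a + \<delta>"
    and st_conc: "\<And>n. nm \<le> n \<Longrightarrow> n \<le> np \<Longrightarrow>
        measure_pmf.prob (gnp n p)
          {G. s n \<le> int (chromatic_number n G) \<and> int (chromatic_number n G) \<le> t n} \<ge> 0.9"
    and r_mono: "mono_on {nm..np} r"
    and r_pos: "\<And>n. nm \<le> n \<Longrightarrow> n \<le> np \<Longrightarrow> 0 < r n"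
    and coupling: "\<And>n. nm \<le> n \<Longrightarrow> n \<le> np \<Longrightarrow>
        \<exists>\<mu> :: (nat set set \<times> nat set set) pmf.
           map_pmf fst \<mu> = gnp n p \<and> map_pmf snd \<mu> = gnp (n + a * r n) p \<and>
           measure_pmf.prob \<mu>
             {(G, H). chromatic_number (n + a * r n) H \<le> chromatic_number n G + r n} \<ge> 0.4"
    and width1: "real (np - nm) \<ge> 5 * \<Delta> / \<delta>"
    and width2: "np - nm \<ge> 5 * a * r np"
  shows "\<exists>n. nm \<le> n \<and> n \<le> np \<and> real_of_int (t n - s n) > real a * \<delta> * real (r n) / 2"
proof (rule ccontr)
  assume "\<not> ?thesis"
  then have W: "real_of_int (t n - s n) \<le> real a * \<delta> * real (r n) / 2" if "nm \<le> n" "n \<le> np" for n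
    using that by force
  have S0: "real_of_int (s n) \<le> f (real n) + \<Delta>" if "nm \<le> n" "n \<le> np" for n
  proof -
    let ?A = "{G. s n \<le> int (chromatic_number n G) \<and> int (chromatic_number n G) \<le> t n}"
    let ?B = "{G. f (real n) - \<Delta> \<le> real (chromatic_number n G) \<and>
              real (chromatic_number n G) \<le> f (real n) + \<Delta>}"
    have "?A \<inter> ?B \<noteq> {}"
      by (rule pmf_inter_ne[of "gnp n p"]) (use st_conc[OF that] f_conc[OF that] in simp)
    then obtain G where "G \<in> ?A" "G \<in> ?B" by blast
    then show ?thesis by force
  qed
  have CP: "\<exists>G H. s n \<le> int (chromatic_number n G) \<and> int (chromatic_number n G) \<le> t n \<and>
      P (n + a * r n) H \<and> chromatic_number (n + a * r n) H \<le> chromatic_number n G + r n"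
    if I1: "nm \<le> n" and I2: "n \<le> np" and I3: "n + a * r n \<le> np"
       and PB: "measure_pmf.prob (gnp (n + a * r n) p) {H. P (n + a * r n) H} \<ge> 0.9"
    for n P
  proof -
    obtain \<mu> where mu: "map_pmf fst \<mu> = gnp n p" "map_pmf snd \<mu> = gnp (n + a * r n) p"
      "measure_pmf.prob \<mu> {(G, H). chromatic_number (n + a * r n) H \<le> chromatic_number n G + r n} \<ge> 0.4"
      using coupling[OF I1 I2] by blast
    let ?A = "fst -` {G. s n \<le> int (chromatic_number n G) \<and> int (chromatic_number n G) \<le> t n}"
    let ?B = "snd -` {H. P (n + a * r n) H}"
    let ?C = "{(G, H). chromatic_number (n + a * r n) H \<le> chromatic_number n G + r n}"
    have pa: "measure_pmf.prob \<mu> ?A \<ge> 0.9"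
      using st_conc[OF I1 I2] mu(1) measure_map_pmf[of fst \<mu>] by metis
    have pb: "measure_pmf.prob \<mu> ?B \<ge> 0.9"
      using PB mu(2) measure_map_pmf[of snd \<mu>] by metis
    have "?A \<inter> ?B \<inter> ?C \<noteq> {}"
      by (rule pmf_inter3_ne[of \<mu>]) (use pa pb mu(3) in simp)
    then show ?thesis by auto
  qed
  have Step: "s (n + a * r n) \<le> t n + int (r n)" if T: "nm \<le> n" "n \<le> np" "n + a * r n \<le> np" for n
  proof -
    have h: "nm \<le> n + a * r n" using that by simp
    obtain G H where "s n \<le> int (chromatic_number n G)" "int (chromatic_number n G) \<le> t n"
      "s (n + a * r n) \<le> int (chromatic_number (n + a * r n) H)"
      "chromatic_number (n + a * r n) H \<le> chromatic_number n G + r n"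
      using CP[OF T, of "\<lambda>m H. s m \<le> int (chromatic_number m H) \<and> int (chromatic_number m H) \<le> t m"]
        st_conc[OF h T(3)] by auto
    then show ?thesis by linarith
  qed
  have Fin: "f (real (n + a * r n)) - \<Delta> \<le> real_of_int (t n) + real (r n)"
    if T: "nm \<le> n" "n \<le> np" "n + a * r n \<le> np" for n
  proof -
    have h: "nm \<le> n + a * r n" using that by simp
    have "measure_pmf.prob (gnp (n + a * r n) p) {H. f (real (n + a * r n)) - \<Delta> \<le> real (chromatic_number (n + a * r n) H)}
        \<ge> measure_pmf.prob (gnp (n + a * r n) p) {G. f (real (n + a * r n)) - \<Delta> \<le> real (chromatic_number (n + a * r n) G) \<and>
              real (chromatic_number (n + a * r n) G) \<le> f (real (n + a * r n)) + \<Delta>}"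
      by (rule measure_pmf.finite_measure_mono) auto
    with f_conc[OF h that(3)] have
      "measure_pmf.prob (gnp (n + a * r n) p) {H. f (real (n + a * r n)) - \<Delta> \<le> real (chromatic_number (n + a * r n) H)} \<ge> 0.9"
      by simp
    then obtain G H where "int (chromatic_number n G) \<le> t n"
      "f (real (n + a * r n)) - \<Delta> \<le> real (chromatic_number (n + a * r n) H)"
      "chromatic_number (n + a * r n) H \<le> chromatic_number n G + r n"
      using CP[OF T, of "\<lambda>m H. f (real m) - \<Delta> \<le> real (chromatic_number m H)"] by auto
    then have "f (real (n + a * r n)) - \<Delta> \<le> real (chromatic_number n G + r n)"
      by (smt (verit) of_nat_le_iff)
    moreover have "real (chromatic_number n G) \<le> real_of_int (t n)"
      using \<open>int (chromatic_number n G) \<le> t n\<close> by linarith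
    ultimately show ?thesis by simp
  qed
  define N where "N = rec_nat nm (\<lambda>_ m. m + a * r m)"
  have N0: "N 0 = nm" and NS: "\<And>i. N (Suc i) = N i + a * r (N i)" by (simp_all add: N_def)
  have Nge: "nm \<le> N i" for i by (induction i) (auto simp: NS N0)
  have Nle: "N i \<le> N (Suc i)" for i by (simp add: NS)
  have Inv: "N i \<le> np \<longrightarrow> real_of_int (s (N i)) \<le> f (real nm) + \<Delta> + (1 / real a + \<delta> / 2) * (real (N i) - real nm)" for i
  proof (induction i)
    case 0
    then show ?case using S0[of nm] nm_lt_np by (simp add: N0)
  next
    case (Suc i)
    show ?case
    proof
      assume le: "N (Suc i) \<le> np"
      then have le': "N i \<le> np" using Nle[of i] by linarith
      have st: "s (N (Suc i)) \<le> t (N i) + int (r (N i))" using Step[OF Nge le'] le NS by simp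
      have w: "real_of_int (t (N i) - s (N i)) \<le> real a * \<delta> * real (r (N i)) / 2" using W[OF Nge le'] .
      have e: "(1 / real a + \<delta> / 2) * (real (N (Suc i)) - real nm) =
        (1 / real a + \<delta> / 2) * (real (N i) - real nm) + real (r (N i)) + real a * \<delta> * real (r (N i)) / 2"
        using a_pos by (simp add: NS field_simps)
      show "real_of_int (s (N (Suc i))) \<le> f (real nm) + \<Delta> + (1 / real a + \<delta> / 2) * (real (N (Suc i)) - real nm)"
        using Suc.IH le' st w e by linarith
    qed
  qed
  have rle: "r n \<le> r np" if "nm \<le> n" "n \<le> np" for n
    using r_mono that nm_lt_np by (auto simp: mono_on_def)
  have N1: "N (Suc 0) \<le> np"
  proof -
    have "a * r nm \<le> a * r np" using rle[of nm] nm_lt_np by simp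
    moreover have "a * r np \<le> 5 * a * r np" by simp
    ultimately have "a * r nm \<le> np - nm" using width2 by linarith
    then show ?thesis using nm_lt_np by (simp add: NS N0)
  qed
  have "\<exists>k. N (Suc k) \<le> np \<and> \<not> N (Suc (Suc k)) \<le> np"
  proof (rule ccontr)
    assume H: "\<not> ?thesis"
    have all: "N (Suc k) \<le> np" for k
      by (induction k) (use N1 H in auto)
    have grow: "N i \<le> np \<longrightarrow> nm + i \<le> N i" for i
    proof (induction i)
      case 0 then show ?case by (simp add: N0)
    next
      case (Suc i)
      show ?case
      proof
        assume le: "N (Suc i) \<le> np"
        then have le': "N i \<le> np" using Nle[of i] by linarith
        have "0 < r (N i)" using r_pos[OF Nge le'] .
        then have "1 \<le> a * r (N i)" using a_pos by (metis One_nat_def Suc_leI nat_0_less_mult_iff)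
        moreover have "nm + i \<le> N i" using Suc.IH le' by simp
        ultimately show "nm + Suc i \<le> N (Suc i)" unfolding NS by linarith
      qed
    qed
    from grow[of "Suc np"] all[of np] show False by simp
  qed
  then obtain k where k1: "N (Suc k) \<le> np" and k2: "\<not> N (Suc (Suc k)) \<le> np" by blast
  define m where "m = N k"
  define m' where "m' = N (Suc k)"
  have m'def: "m' = m + a * r m" by (simp add: m_def m'_def NS)
  have mI: "nm \<le> m" "m \<le> np" using Nge[of k] Nle[of k] k1 by (auto simp: m_def)
  have m'I: "nm \<le> m'" "m' \<le> np" using Nge[of "Suc k"] k1 by (auto simp: m'_def)
  have over: "np < m' + a * r m'" using k2 by (simp add: NS m'_def)
  have fin: "f (real m') - \<Delta> \<le> real_of_int (t m) + real (r m)"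
    using Fin[OF mI] m'I m'def by simp
  have w: "real_of_int (t m - s m) \<le> real a * \<delta> * real (r m) / 2" using W[OF mI] .
  have inv: "real_of_int (s m) \<le> f (real nm) + \<Delta> + (1 / real a + \<delta> / 2) * (real m - real nm)"
    using Inv[of k] mI by (simp add: m_def)
  have e: "(1 / real a + \<delta> / 2) * (real m' - real nm) =
        (1 / real a + \<delta> / 2) * (real m - real nm) + real (r m) + real a * \<delta> * real (r m) / 2"
    using a_pos by (simp add: m'def field_simps)
  define x where "x = real m' - real nm"
  have up: "f (real m') - f (real nm) \<le> 2 * \<Delta> + (1 / real a + \<delta> / 2) * x"
    using fin w inv e unfolding x_def by linarith
  have "\<exists>\<xi>\<in>{real nm..real m'}. f (real m') - f (real nm) = (\<lambda>h. f' \<xi> * h) (real m' - real nm)"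
  proof (rule mvt_very_simple)
    show "real nm \<le> real m'" using m'I by simp
    fix y assume y: "real nm \<le> y" "y \<le> real m'"
    have "(f has_real_derivative f' y) (at y within {real nm..real np})"
      using f_deriv y m'I by simp
    then have "(f has_real_derivative f' y) (at y within {real nm..real m'})"
      by (rule DERIV_subset) (use m'I in auto)
    then show "(f has_derivative (\<lambda>h. f' y * h)) (at y within {real nm..real m'})"
      by (simp add: has_field_derivative_def)
  qed
  then obtain \<xi> where xi: "real nm \<le> \<xi>" "\<xi> \<le> real m'" and fe: "f (real m') - f (real nm) = f' \<xi> * x"
    by (auto simp: x_def)
  have "f' \<xi> \<ge> 1 / real a + \<delta>" using f'_lower xi m'I by simp
  moreover have x0: "x \<ge> 0" using m'I by (simp add: x_def)
  ultimately have "f' \<xi> * x \<ge> (1 / real a + \<delta>) * x" by (simp add: mult_right_mono)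
  with fe up have "(1 / real a + \<delta>) * x \<le> 2 * \<Delta> + (1 / real a + \<delta> / 2) * x" by linarith
  then have A: "\<delta> * x \<le> 4 * \<Delta>" by (simp add: algebra_simps)
  have "real (r m') \<le> real (r np)" using rle[OF m'I] by simp
  have B1: "real np < real m' + real a * real (r np)"
  proof -
    have "a * r m' \<le> a * r np" using rle[OF m'I] by simp
    then have "np < m' + a * r np" using over by linarith
    then have "real np < real (m' + a * r np)" by (simp only: of_nat_less_iff)
    then show ?thesis by simp
  qed
  have D: "real (np - nm) = real np - real nm" using nm_lt_np by simp
  have B2: "5 * (real a * real (r np)) \<le> real np - real nm"
  proof -
    have "real (5 * a * r np) \<le> real (np - nm)" using width2 by (simp only: of_nat_le_iff)
    then show ?thesis using D by simp
  qed
  have xgt: "x > (real np - real nm) * 4 / 5" using B1 B2 by (simp add: x_def)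
  have W1: "5 * \<Delta> \<le> \<delta> * (real np - real nm)"
    using width1 D delta_pos by (simp add: pos_divide_le_eq mult.commute)
  have "\<delta> * ((real np - real nm) * 4 / 5) < \<delta> * x"
    by (rule mult_strict_left_mono) (use xgt delta_pos in auto)
  moreover have "\<delta> * ((real np - real nm) * 4 / 5) = 4 / 5 * (\<delta> * (real np - real nm))" by simp
  ultimately have "4 * \<Delta> < \<delta> * x" using W1 by linarith
  with A show False by linarith
qed

end
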